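(* Assume the standing setting of the context, and let $\varrho,\sigma$ be continuous strictly positive densities on $D\times(0,T)$ (with respect to Lebesgue measure) of two measures in $\mathbb{M}_\nu$; set $v=\sigma/\varrho$. Suppose that for a.e. $t\in(0,T)$ $$\int_D\varrho(x,t)\,dx=\nu(D)+\int_0^t\int_Dc\,\varrho\,dx\,ds,\qquad \int_D\sigma(x,t)\,dx\le\nu(D)+\int_0^t\int_Dc\,\sigma\,dx\,ds,$$ and that for every $\lambda>0$ and a.e. $t\in(0,T)$ $$\int_De^{\lambda(1-v(x,t))}\varrho(x,t)\,dx\le1.$$ Then $v\equiv1$ on $D\times(0,T)$, i.e. $\sigma=\varrho$.
   Context: $T>0$; $D\subset\mathbb{R}^d$ open with exhaustion $(D_k)$ (bounded open, increasing, $\overline{D_k}\subset D_{k+1}$, $\bigcup D_k=D$); $\nu$ a Borel probability measure on $D$; $c\le0$. Coefficients $a^{ij},b^i,c$ Borel on $D\times[0,T]$, $A=(a^{ij})$ symmetric, satisfying (H1): for each $k$ there are $m_k,M_k>0$ with $m_k|y|^2\le(A(x,t)y,y)\le M_k|y|^2$ on $D_k\times[0,T]$; and (H2): for each $k$ there is $\Lambda_k$ with $|a^{ij}(x,t)-a^{ij}(y,t)|\le\Lambda_k|x-y|$ for $x,y\in D_k$, $t\in[0,T]$. Moreover $b\in L^p_{loc}(D\times(0,T))$, $c\in L^{p/2}_{loc}(D\times(0,T))$ for some $p>d+2$. $L\varphi=a^{ij}\partial_{x_i}\partial_{x_j}\varphi+b^i\partial_{x_i}\varphi+c\varphi$. Solutions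 of the Cauchy problem $\partial_t\mu=\partial_{x_i}\partial_{x_j}(a^{ij}\mu)-\partial_{x_i}(b^i\mu)+c\mu$, $\mu|_{t=0}=\nu$, are flows $(\mu_t)$ of Borel measures on $D$ (with $t\mapsto\mu_t(B)$ measurable, $\mu=\mu_t\,dt$ locally finite on $D\times(0,T)$) such that $a^{ij},b^i,c\in L^1(\overline{D_k}\times J,|\mu|)$ for all $k$ and compact $J\subset(0,T)$ and for every $\varphi\in C_0^\infty(D)$ and a.e. $t$: $\int\varphi\,d\mu_t-\int\varphi\,d\nu=\lim_{\varepsilon\to0+}\int_\varepsilon^t\int_DL\varphi\,d\mu_s\,ds$. $\mathcal{M}_\nu$: such solutions with $\mu_t\ge0$, $|c|\in L^1(\mu)$ and $\mu_t(D)\le\nu(D)+\int_0^t\int_Dc\,d\mu_s\,ds$ for a.e. $t$. $\mathbb{M}_\nu$: those $\mu\in\mathcal{M}_\nu$ with $b\in L^2(\mu,D_k\times[0,T])$ for all $k$. *)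

theory Defs
  imports "HOL-Analysis.Analysis"
begin

text \<open>Points of R^d are vectors of type real^'n (so d = CARD('n)); time is real.
  A flow of (nonnegative) Borel measures on D is a family mu :: real => (real^'n) measure,
  each mu t a Borel measure on R^d carried by D.\<close>

definition exhaustion :: "(real^'n::finite) set \<Rightarrow> (nat \<Rightarrow> (real^'n) set) \<Rightarrow> bool" where
  "exhaustion D Dk \<longleftrightarrow>
     (\<forall>k. open (Dk k) \<and> bounded (Dk k) \<and> Dk k \<subseteq> Dk (Suc k) \<and> closure (Dk k) \<subseteq> Dk (Suc k))
     \<and> (\<Union>k. Dk k) = D"

definition pd :: "'n::finite \<Rightarrow> (real^'n \<Rightarrow> real) \<Rightarrow> real^'n \<Rightarrow> real" where
  "pd i f x = frechet_derivative f (at x) (axis i 1)"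

fun pds :: "('n::finite) list \<Rightarrow> (real^'n \<Rightarrow> real) \<Rightarrow> real^'n \<Rightarrow> real" where
  "pds [] f = f"
| "pds (i # is) f = pd i (pds is f)"

definition smooth_fun :: "(real^'n::finite \<Rightarrow> real) \<Rightarrow> bool" where
  "smooth_fun f \<longleftrightarrow> (\<forall>is. \<forall>x. pds is f differentiable (at x))"

definition test_fun :: "(real^'n::finite) set \<Rightarrow> (real^'n \<Rightarrow> real) \<Rightarrow> bool" where
  "test_fun D \<phi> \<longleftrightarrow> smooth_fun \<phi> \<and> compact (closure {x. \<phi> x \<noteq> 0})
      \<and> closure {x. \<phi> x \<noteq> 0} \<subseteq> D"

definition Lop :: "(real^'n::finite \<Rightarrow> real \<Rightarrow> 'n \<Rightarrow> 'n \<Rightarrow> real) \<Rightarrow> (real^'n \<Rightarrow> real \<Rightarrow> real^'n)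
    \<Rightarrow> (real^'n \<Rightarrow> real \<Rightarrow> real) \<Rightarrow> (real^'n \<Rightarrow> real) \<Rightarrow> real^'n \<Rightarrow> real \<Rightarrow> real" where
  "Lop a b c \<phi> x t = (\<Sum>i\<in>UNIV. \<Sum>j\<in>UNIV. a x t i j * pd i (pd j \<phi>) x)
      + (\<Sum>i\<in>UNIV. b x t $ i * pd i \<phi> x) + c x t * \<phi> x"

text \<open>Local L^p integrability (w.r.t. Lebesgue measure on R^d x R) on a set U,
  for a nonnegative function f (typically a norm / absolute value).\<close>

definition Lp_loc :: "((real^'n::finite) \<times> real) set \<Rightarrow> ((real^'n) \<times> real \<Rightarrow> real) \<Rightarrow> real \<Rightarrow> bool" where
  "Lp_loc U f p \<longleftrightarrow> (\<forall>K. compact K \<and> K \<subseteq> U \<longrightarrow>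
       (\<integral>\<^sup>+z. indicator K z * ennreal (f z powr p) \<partial>lborel) < \<infinity>)"

definition flow_int :: "real \<Rightarrow> (real \<Rightarrow> (real^'n::finite) measure) \<Rightarrow> (real^'n \<Rightarrow> real \<Rightarrow> real)
    \<Rightarrow> ((real^'n) \<times> real) set \<Rightarrow> ennreal" where
  "flow_int T \<mu> f S = (\<integral>\<^sup>+t. indicator {0<..<T} t *
       (\<integral>\<^sup>+x. indicator S (x, t) * ennreal (f x t) \<partial>\<mu> t) \<partial>lborel)"

definition standing_setting :: "real \<Rightarrow> (real^'n::finite) set \<Rightarrow> (nat \<Rightarrow> (real^'n) set)
    \<Rightarrow> (real^'n) measure \<Rightarrow> (real^'n \<Rightarrow> real \<Rightarrow> 'n \<Rightarrow> 'n \<Rightarrow> real) \<Rightarrow> (real^'n \<Rightarrow> real \<Rightarrow> real^'n)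
    \<Rightarrow> (real^'n \<Rightarrow> real \<Rightarrow> real) \<Rightarrow> real \<Rightarrow> bool" where
  "standing_setting T D Dk \<nu> a b c p \<longleftrightarrow>
     T > 0 \<and> open D \<and> exhaustion D Dk
     \<and> sets \<nu> = sets borel \<and> emeasure \<nu> (space \<nu>) = 1 \<and> emeasure \<nu> (- D) = 0
     \<and> (\<forall>x\<in>D. \<forall>t\<in>{0..T}. c x t \<le> 0)
     \<and> (\<forall>i j. set_borel_measurable borel (D \<times> {0..T}) (\<lambda>(x, t). a x t i j))
     \<and> (\<forall>i. set_borel_measurable borel (D \<times> {0..T}) (\<lambda>(x, t). b x t $ i))
     \<and> set_borel_measurable borel (D \<times> {0..T}) (\<lambda>(x, t). c x t)
     \<and> (\<forall>x\<in>D. \<forall>t\<in>{0..T}. \<forall>i j. a x t i j = a x t j i)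
     \<and> (\<forall>k. \<exists>m M. m > 0 \<and> M > 0 \<and> (\<forall>x\<in>Dk k. \<forall>t\<in>{0..T}. \<forall>y::real^'n.
           m * (norm y)\<^sup>2 \<le> (\<Sum>i\<in>UNIV. \<Sum>j\<in>UNIV. a x t i j * y $ i * y $ j)
           \<and> (\<Sum>i\<in>UNIV. \<Sum>j\<in>UNIV. a x t i j * y $ i * y $ j) \<le> M * (norm y)\<^sup>2))
     \<and> (\<forall>k. \<exists>\<Lambda>. \<forall>x\<in>Dk k. \<forall>y\<in>Dk k. \<forall>t\<in>{0..T}. \<forall>i j.
           \<bar>a x t i j - a y t i j\<bar> \<le> \<Lambda> * dist x y)
     \<and> p > real CARD('n) + 2
     \<and> Lp_loc (D \<times> {0<..<T}) (\<lambda>(x, t). norm (b x t)) p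
     \<and> Lp_loc (D \<times> {0<..<T}) (\<lambda>(x, t). \<bar>c x t\<bar>) (p / 2)"

definition nn_solution :: "real \<Rightarrow> (real^'n::finite) set \<Rightarrow> (nat \<Rightarrow> (real^'n) set)
    \<Rightarrow> (real^'n) measure \<Rightarrow> (real^'n \<Rightarrow> real \<Rightarrow> 'n \<Rightarrow> 'n \<Rightarrow> real) \<Rightarrow> (real^'n \<Rightarrow> real \<Rightarrow> real^'n)
    \<Rightarrow> (real^'n \<Rightarrow> real \<Rightarrow> real) \<Rightarrow> (real \<Rightarrow> (real^'n) measure) \<Rightarrow> bool" where
  "nn_solution T D Dk \<nu> a b c \<mu> \<longleftrightarrow>
     (\<forall>t\<in>{0<..<T}. sets (\<mu> t) = sets borel \<and> emeasure (\<mu> t) (- D) = 0)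
     \<and> (\<forall>B\<in>sets borel. (\<lambda>t. emeasure (\<mu> t) B) \<in> borel_measurable (restrict_space lborel {0<..<T}))
     \<and> (\<forall>K. compact K \<and> K \<subseteq> D \<times> {0<..<T} \<longrightarrow> flow_int T \<mu> (\<lambda>x t. 1) K < \<infinity>)
     \<and> (\<forall>k J. compact J \<and> J \<subseteq> {0<..<T} \<longrightarrow>
          (\<forall>i j. flow_int T \<mu> (\<lambda>x t. \<bar>a x t i j\<bar>) (closure (Dk k) \<times> J) < \<infinity>)
          \<and> (\<forall>i. flow_int T \<mu> (\<lambda>x t. \<bar>b x t $ i\<bar>) (closure (Dk k) \<times> J) < \<infinity>)
          \<and> flow_int T \<mu> (\<lambda>x t. \<bar>c x t\<bar>) (closure (Dk k) \<times> J) < \<infinity>)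
     \<and> (\<forall>\<phi>. test_fun D \<phi> \<longrightarrow>
          (AE t in lborel. t \<in> {0<..<T} \<longrightarrow>
             ((\<lambda>\<epsilon>. \<integral>s\<in>{\<epsilon>..t}. (\<integral>x. Lop a b c \<phi> x s \<partial>\<mu> s) \<partial>lborel)
                \<longlongrightarrow> (\<integral>x. \<phi> x \<partial>\<mu> t) - (\<integral>x. \<phi> x \<partial>\<nu>)) (at_right 0)))"

definition in_M_nu where
  "in_M_nu T D Dk \<nu> a b c \<mu> \<longleftrightarrow>
     nn_solution T D Dk \<nu> a b c \<mu>
     \<and> flow_int T \<mu> (\<lambda>x t. \<bar>c x t\<bar>) (D \<times> UNIV) < \<infinity>
     \<and> (AE t in lborel. t \<in> {0<..<T} \<longrightarrow>
          emeasure (\<mu> t) D \<noteq> \<infinity> \<and>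
          measure (\<mu> t) D \<le> measure \<nu> D + (\<integral>s\<in>{0..t}. (\<integral>x\<in>D. c x s \<partial>\<mu> s) \<partial>lborel))"

definition in_MM_nu where
  "in_MM_nu T D Dk \<nu> a b c \<mu> \<longleftrightarrow>
     in_M_nu T D Dk \<nu> a b c \<mu>
     \<and> (\<forall>k. flow_int T \<mu> (\<lambda>x t. (norm (b x t))\<^sup>2) (Dk k \<times> {0..T}) < \<infinity>)"

definition dens_flow :: "(real^'n::finite) set \<Rightarrow> (real^'n \<Rightarrow> real \<Rightarrow> real) \<Rightarrow> real \<Rightarrow> (real^'n) measure" where
  "dens_flow D \<rho> t = density lborel (\<lambda>x. indicator D x * ennreal (\<rho> x t))"

end

theory Submission
  imports Defs
begin

lemma sect_meas:
  fixes h :: "(real^'n::finite) \<times> real \<Rightarrow> real"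
  assumes "h \<in> borel_measurable borel"
  shows "(\<lambda>x. h (x, t)) \<in> borel_measurable borel"
proof -
  have "(\<lambda>x::real^'n. (x, t)) \<in> borel_measurable borel"
    by (intro borel_measurable_continuous_onI continuous_intros)
  from measurable_compose[OF this assms] show ?thesis by simp
qed

lemma G_lemma:
  fixes T :: real and D :: "(real^'n::finite) set" and c f :: "real^'n \<Rightarrow> real \<Rightarrow> real"
  assumes oD: "open D"
    and cmeas: "(\<lambda>z. indicator (D \<times> {0..T}) z *\<^sub>R (\<lambda>(x, t). c x t) z) \<in> borel_measurable borel"
    and fcont: "continuous_on (D \<times> {0<..<T}) (\<lambda>(x, t). f x t)"
    and fpos: "\<forall>x\<in>D. \<forall>t\<in>{0<..<T}. f x t > 0"
    and fflow: "flow_int T (dens_flow D f) (\<lambda>x t. \<bar>c x t\<bar>) (D \<times> UNIV) < \<infinity>"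
  defines "g \<equiv> \<lambda>x s. indicator (D \<times> {0<..<T}) (x,s) * (c x s * f x s)"
  shows "(\<lambda>(x,s). g x s) \<in> borel_measurable borel"
    and "(\<integral>\<^sup>+s. (\<integral>\<^sup>+x. ennreal \<bar>g x s\<bar> \<partial>lborel) \<partial>lborel) < \<infinity>"
proof -
  have oDT: "open (D \<times> {0<..<T})" using oD by (intro open_Times) auto
  have fmeas: "(\<lambda>z. indicator (D \<times> {0<..<T}) z *\<^sub>R (\<lambda>(x, t). f x t) z) \<in> borel_measurable borel"
    using oDT fcont by (intro borel_measurable_continuous_on_indicator) auto
  have geq: "(\<lambda>(x,s). g x s) = (\<lambda>z. (indicator (D \<times> {0..T}) z *\<^sub>R (\<lambda>(x, t). c x t) z)
      * (indicator (D \<times> {0<..<T}) z *\<^sub>R (\<lambda>(x, t). f x t) z))"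
    by (auto simp: g_def fun_eq_iff indicator_def)
  show gm: "(\<lambda>(x,s). g x s) \<in> borel_measurable borel"
    unfolding geq using cmeas fmeas by (intro borel_measurable_times)
  have inner: "indicator {0<..<T} t * (\<integral>\<^sup>+x. indicator (D \<times> UNIV) (x, t) * ennreal \<bar>c x t\<bar>
        \<partial>dens_flow D f t) = (\<integral>\<^sup>+x. ennreal \<bar>g x t\<bar> \<partial>lborel)" for t
  proof (cases "t \<in> {0<..<T}")
    case False
    then show ?thesis by (simp add: g_def)
  next
    case True
    have m1: "(\<lambda>x. indicator D x * ennreal (f x t)) \<in> borel_measurable lborel"
    proof -
      have A: "(\<lambda>x. ennreal (indicator (D \<times> {0<..<T}) (x,t) *\<^sub>R (\<lambda>(x, t). f x t) (x,t))) \<in> borel_measurable borel"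
        using sect_meas[OF fmeas, of t] by measurable
      have eq: "(\<lambda>x. ennreal (indicator (D \<times> {0<..<T}) (x,t) *\<^sub>R (\<lambda>(x, t). f x t) (x,t)))
          = (\<lambda>x. indicator D x * ennreal (f x t))" using True by (auto simp: fun_eq_iff indicator_def)
      show ?thesis using A unfolding eq by simp
    qed
    have m2: "(\<lambda>x. indicator (D \<times> UNIV) (x, t) * ennreal \<bar>c x t\<bar>) \<in> borel_measurable lborel"
    proof -
      have A: "(\<lambda>x. ennreal \<bar>indicator (D \<times> {0..T}) (x,t) *\<^sub>R (\<lambda>(x, t). c x t) (x,t)\<bar>) \<in> borel_measurable borel"
        using sect_meas[OF cmeas, of t] by measurable
      have eq: "(\<lambda>x. ennreal \<bar>indicator (D \<times> {0..T}) (x,t) *\<^sub>R (\<lambda>(x, t). c x t) (x,t)\<bar>)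
          = (\<lambda>x. indicator (D \<times> UNIV) (x, t) * ennreal \<bar>c x t\<bar>)" using True by (auto simp: fun_eq_iff indicator_def)
      show ?thesis using A unfolding eq by simp
    qed
    have "(\<integral>\<^sup>+x. indicator (D \<times> UNIV) (x, t) * ennreal \<bar>c x t\<bar> \<partial>dens_flow D f t)
        = (\<integral>\<^sup>+x. (indicator D x * ennreal (f x t)) * (indicator (D \<times> UNIV) (x, t) * ennreal \<bar>c x t\<bar>) \<partial>lborel)"
      unfolding dens_flow_def using m1 m2 by (rule nn_integral_density)
    also have "\<dots> = (\<integral>\<^sup>+x. ennreal \<bar>g x t\<bar> \<partial>lborel)"
    proof (rule nn_integral_cong)
      fix x
      show "(indicator D x * ennreal (f x t)) * (indicator (D \<times> UNIV) (x, t) * ennreal \<bar>c x t\<bar>) = ennreal \<bar>g x t\<bar>"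
      proof (cases "x \<in> D")
        case True
        then have "f x t > 0" using fpos \<open>t \<in> {0<..<T}\<close> by auto
        then show ?thesis using True \<open>t \<in> {0<..<T}\<close>
          by (simp add: g_def abs_mult ennreal_mult' mult.commute)
      qed (simp add: g_def)
    qed
    finally show ?thesis using True by simp
  qed
  have "(\<integral>\<^sup>+s. (\<integral>\<^sup>+x. ennreal \<bar>g x s\<bar> \<partial>lborel) \<partial>lborel) = flow_int T (dens_flow D f) (\<lambda>x t. \<bar>c x t\<bar>) (D \<times> UNIV)"
    unfolding flow_int_def using inner by simp
  then show "(\<integral>\<^sup>+s. (\<integral>\<^sup>+x. ennreal \<bar>g x s\<bar> \<partial>lborel) \<partial>lborel) < \<infinity>" using fflow by simp
qed

lemma G2:
  fixes g :: "real^'n::finite \<Rightarrow> real \<Rightarrow> real"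
  assumes gm: "(\<lambda>(x,s). g x s) \<in> borel_measurable borel"
    and fin: "(\<integral>\<^sup>+s. (\<integral>\<^sup>+x. ennreal \<bar>g x s\<bar> \<partial>lborel) \<partial>lborel) < \<infinity>"
  shows "AE s in lborel. integrable lborel (\<lambda>x. g x s)"
    and "integrable lborel (\<lambda>s. \<integral>x. g x s \<partial>lborel)"
proof -
  have sm: "(\<lambda>x. g x s) \<in> borel_measurable lborel" for s
    using sect_meas[OF gm, of s] by simp
  have "(\<lambda>z. (\<lambda>(x,s). g x s) (snd z, fst z)) \<in> borel_measurable borel"
    using gm by (intro measurable_compose[OF _ gm] borel_measurable_continuous_onI continuous_intros)
  then have sw: "(\<lambda>(s,x). g x s) \<in> borel_measurable (lborel \<Otimes>\<^sub>M lborel)"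
    by (simp add: lborel_prod split_beta')
  have sw2: "(\<lambda>(s,x). ennreal \<bar>g x s\<bar>) \<in> borel_measurable (lborel \<Otimes>\<^sub>M lborel)"
    using sw by (simp add: split_beta') measurable
  have nm: "(\<lambda>s. \<integral>\<^sup>+x. ennreal \<bar>g x s\<bar> \<partial>lborel) \<in> borel_measurable lborel"
    using lborel.borel_measurable_nn_integral[OF sw2] by simp
  have "AE s in lborel. (\<integral>\<^sup>+x. ennreal \<bar>g x s\<bar> \<partial>lborel) \<noteq> \<infinity>"
    using nn_integral_PInf_AE[OF nm] fin by simp
  then show "AE s in lborel. integrable lborel (\<lambda>x. g x s)"
  proof (rule AE_mp, intro AE_I2 impI)
    fix s assume "(\<integral>\<^sup>+x. ennreal \<bar>g x s\<bar> \<partial>lborel) \<noteq> \<infinity>"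
    then show "integrable lborel (\<lambda>x. g x s)"
      using sm by (intro integrableI_bounded) (auto simp: less_top)
  qed
  have im: "(\<lambda>s. \<integral>x. g x s \<partial>lborel) \<in> borel_measurable lborel"
    using lborel.borel_measurable_lebesgue_integral[OF sw] by simp
  have "(\<integral>\<^sup>+s. ennreal (norm (\<integral>x. g x s \<partial>lborel)) \<partial>lborel) \<le> (\<integral>\<^sup>+s. (\<integral>\<^sup>+x. ennreal \<bar>g x s\<bar> \<partial>lborel) \<partial>lborel)"
  proof (rule nn_integral_mono)
    fix s
    show "ennreal (norm (\<integral>x. g x s \<partial>lborel)) \<le> (\<integral>\<^sup>+x. ennreal \<bar>g x s\<bar> \<partial>lborel)"
    proof (cases "integrable lborel (\<lambda>x. g x s)")
      case True
      then show ?thesis using integral_norm_bound_ennreal[OF True] by simp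
    next
      case False
      then show ?thesis by (simp add: not_integrable_integral_eq)
    qed
  qed
  then show "integrable lborel (\<lambda>s. \<integral>x. g x s \<partial>lborel)"
    using fin im by (intro integrableI_bounded) auto
qed

lemma AE_ball_ex:
  fixes t0 :: "'a::euclidean_space"
  assumes "AE t in lborel. P t" "e > 0"
  shows "\<exists>t\<in>ball t0 e. P t"
proof (rule ccontr)
  assume "\<not> (\<exists>t\<in>ball t0 e. P t)"
  then have "AE t in lborel. t \<notin> ball t0 e" using assms(1) by (auto elim: AE_mp)
  then have "ball t0 e \<in> null_sets lborel" by (subst AE_iff_null_sets) auto
  then have "measure lborel (ball t0 e) = 0" by (simp add: measure_def null_setsD1)
  then show False using assms(2) content_ball_gt_0_iff[of t0 e] by simp
qed

lemma dist_pair_lt: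
  fixes x x0 :: "'a::metric_space" and t t0 :: "'b::metric_space"
  assumes "dist x x0 < e/2" "dist t t0 < e/2"
  shows "dist (x,t) (x0,t0) < e"
proof -
  have "dist (x,t) (x0,t0) \<le> dist x x0 + dist t t0"
    by (simp add: dist_Pair_Pair sqrt_sum_squares_le_sum zero_le_dist)
  then show ?thesis using assms by simp
qed

lemma sec_meas:
  fixes D :: "(real^'n::finite) set" and f :: "real^'n \<Rightarrow> real \<Rightarrow> real"
  assumes oD: "open D" and fcont: "continuous_on (D \<times> {0<..<T}) (\<lambda>(x, t). f x t)"
    and t: "t \<in> {0<..<T}"
  shows "(\<lambda>x. indicator D x * f x t) \<in> borel_measurable borel"
proof -
  have oDT: "open (D \<times> {0<..<T})" using oD by (intro open_Times) auto
  have fmeas: "(\<lambda>z. indicator (D \<times> {0<..<T}) z *\<^sub>R (\<lambda>(x, t). f x t) z) \<in> borel_measurable borel"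
    using oDT fcont by (intro borel_measurable_continuous_on_indicator) auto
  have eq: "(\<lambda>x. indicator (D \<times> {0<..<T}) (x,t) *\<^sub>R (\<lambda>(x, t). f x t) (x,t)) = (\<lambda>x. indicator D x * f x t)"
    using t by (auto simp: fun_eq_iff indicator_def)
  show ?thesis using sect_meas[OF fmeas, of t] by (simp only: eq)
qed

lemma sec_int:
  fixes D :: "(real^'n::finite) set" and f :: "real^'n \<Rightarrow> real \<Rightarrow> real"
  assumes oD: "open D" and fcont: "continuous_on (D \<times> {0<..<T}) (\<lambda>(x, t). f x t)"
    and fpos: "\<forall>x\<in>D. \<forall>t\<in>{0<..<T}. f x t > 0"
    and t: "t \<in> {0<..<T}" and fin: "emeasure (dens_flow D f t) D \<noteq> \<infinity>"
  shows "integrable lborel (\<lambda>x. indicator D x * f x t)"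
proof -
  have m: "(\<lambda>x. indicator D x * f x t) \<in> borel_measurable lborel"
    using sec_meas[OF oD fcont t] by simp
  have m2: "(\<lambda>x. indicator D x * ennreal (f x t)) \<in> borel_measurable lborel"
  proof -
    have A: "(\<lambda>x. ennreal (indicator D x * f x t)) \<in> borel_measurable lborel" using m by measurable
    have eq: "(\<lambda>x. ennreal (indicator D x * f x t)) = (\<lambda>x. indicator D x * ennreal (f x t))"
      by (auto simp: fun_eq_iff indicator_def)
    show ?thesis using A by (simp only: eq)
  qed
  have "emeasure (dens_flow D f t) D = (\<integral>\<^sup>+x. indicator D x * ennreal (f x t) * indicator D x \<partial>lborel)"
    unfolding dens_flow_def using m2 oD by (intro emeasure_density) auto
  also have "\<dots> = (\<integral>\<^sup>+x. ennreal (norm (indicator D x * f x t)) \<partial>lborel)"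
    using fpos t by (intro nn_integral_cong) (auto simp: indicator_def less_imp_le)
  finally have eq: "emeasure (dens_flow D f t) D = (\<integral>\<^sup>+x. ennreal (norm (indicator D x * f x t)) \<partial>lborel)" .
  have "(\<integral>\<^sup>+x. ennreal (norm (indicator D x * f x t)) \<partial>lborel) < \<infinity>"
    using fin unfolding eq by (simp add: less_top)
  then show ?thesis by (rule integrableI_bounded[OF m])
qed

lemma stepA:
  fixes D :: "(real^'n::finite) set" and \<rho> \<sigma> :: "real^'n \<Rightarrow> real \<Rightarrow> real"
  assumes oD: "open D"
    and rho_cont: "continuous_on (D \<times> {0<..<T}) (\<lambda>(x, t). \<rho> x t)"
    and sigma_cont: "continuous_on (D \<times> {0<..<T}) (\<lambda>(x, t). \<sigma> x t)"
    and rho_pos: "\<forall>x\<in>D. \<forall>t\<in>{0<..<T}. \<rho> x t > 0"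
    and exp_bound: "\<forall>l>0. AE t in lborel. t \<in> {0<..<T} \<longrightarrow>
       (\<integral>\<^sup>+x\<in>D. ennreal (exp (l * (1 - \<sigma> x t / \<rho> x t)) * \<rho> x t) \<partial>lborel) \<le> 1"
  shows "\<forall>x\<in>D. \<forall>t\<in>{0<..<T}. \<rho> x t \<le> \<sigma> x t"
proof (intro ballI, rule ccontr)
  fix x0 t0 assume x0: "x0 \<in> D" and t0: "t0 \<in> {0<..<T}" and lt: "\<not> \<rho> x0 t0 \<le> \<sigma> x0 t0"
  define DT where "DT = D \<times> {0<..<T}"
  have oDT: "open DT" using oD unfolding DT_def by (intro open_Times) auto
  define r where "r = \<rho> x0 t0"
  define d where "d = 1 - \<sigma> x0 t0 / \<rho> x0 t0"
  have r: "r > 0" using rho_pos x0 t0 r_def by auto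
  have "\<sigma> x0 t0 / \<rho> x0 t0 < 1" using lt r unfolding r_def by (simp add: divide_less_eq)
  then have d: "d > 0" unfolding d_def by simp
  have hc: "continuous_on DT (\<lambda>z. 1 - (\<lambda>(x, t). \<sigma> x t) z / (\<lambda>(x, t). \<rho> x t) z)"
  proof -
    have nz: "\<forall>z\<in>DT. (\<lambda>(x, t). \<rho> x t) z \<noteq> 0" using rho_pos unfolding DT_def by fastforce
    have "continuous_on DT (\<lambda>z. (\<lambda>(x, t). \<sigma> x t) z / (\<lambda>(x, t). \<rho> x t) z)"
      using continuous_on_divide[OF sigma_cont[folded DT_def] rho_cont[folded DT_def] nz] by simp
    then show ?thesis by (rule continuous_on_diff[OF continuous_on_const])
  qed
  have rc: "continuous_on DT (\<lambda>(x, t). \<rho> x t)" using rho_cont DT_def by simp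
  define U1 where "U1 = DT \<inter> (\<lambda>z. 1 - (\<lambda>(x, t). \<sigma> x t) z / (\<lambda>(x, t). \<rho> x t) z) -` {d/2<..}"
  define U2 where "U2 = DT \<inter> (\<lambda>(x, t). \<rho> x t) -` {r/2<..}"
  have "open U1" unfolding U1_def
    using hc[unfolded continuous_on_open_vimage[OF oDT], rule_format, OF open_greaterThan] by (simp add: Int_commute)
  moreover have "open U2" unfolding U2_def
    using rc[unfolded continuous_on_open_vimage[OF oDT], rule_format, OF open_greaterThan] by (simp add: Int_commute)
  ultimately have oU: "open (U1 \<inter> U2)" by auto
  have h0: "1 - \<sigma> x0 t0 / \<rho> x0 t0 > d/2" using d d_def by simp
  have h1: "\<rho> x0 t0 > r/2" using r r_def by simp
  have "(x0, t0) \<in> U1 \<inter> U2" using x0 t0 h0 h1 by (simp add: U1_def U2_def DT_def)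
  then obtain e where e: "e > 0" "ball (x0, t0) e \<subseteq> U1 \<inter> U2"
    using oU open_contains_ball by blast
  have inU: "x \<in> D" "t \<in> {0<..<T}" "1 - \<sigma> x t / \<rho> x t > d/2" "\<rho> x t > r/2"
    if "x \<in> ball x0 (e/2)" "t \<in> ball t0 (e/2)" for x t
  proof -
    have "(x,t) \<in> ball (x0,t0) e" using that dist_pair_lt[of x x0 e t t0]
      by (simp add: dist_commute)
    then have "(x,t) \<in> U1 \<inter> U2" using e by auto
    then show "x \<in> D" "t \<in> {0<..<T}" "1 - \<sigma> x t / \<rho> x t > d/2" "\<rho> x t > r/2"
      unfolding U1_def U2_def DT_def by auto
  qed
  have "\<forall>n::nat. AE t in lborel. t \<in> {0<..<T} \<longrightarrow>
       (\<integral>\<^sup>+x\<in>D. ennreal (exp (real (Suc n) * (1 - \<sigma> x t / \<rho> x t)) * \<rho> x t) \<partial>lborel) \<le> 1"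
    by (intro allI, rule exp_bound[rule_format]) simp
  then have "AE t in lborel. \<forall>n::nat. t \<in> {0<..<T} \<longrightarrow>
       (\<integral>\<^sup>+x\<in>D. ennreal (exp (real (Suc n) * (1 - \<sigma> x t / \<rho> x t)) * \<rho> x t) \<partial>lborel) \<le> 1"
    by (rule AE_all_countable[THEN iffD2])
  then have "\<exists>t\<in>ball t0 (e/2). \<forall>n::nat. t \<in> {0<..<T} \<longrightarrow>
       (\<integral>\<^sup>+x\<in>D. ennreal (exp (real (Suc n) * (1 - \<sigma> x t / \<rho> x t)) * \<rho> x t) \<partial>lborel) \<le> 1"
    by (rule AE_ball_ex) (simp add: e(1))
  then obtain t where t: "t \<in> ball t0 (e/2)" and tP: "\<forall>n::nat. t \<in> {0<..<T} \<longrightarrow>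
       (\<integral>\<^sup>+x\<in>D. ennreal (exp (real (Suc n) * (1 - \<sigma> x t / \<rho> x t)) * \<rho> x t) \<partial>lborel) \<le> 1"
    by blast
  have tT: "t \<in> {0<..<T}" using inU(2)[of x0 t] t e by simp
  define B where "B = ball x0 (e/2)"
  define mB where "mB = measure lborel B"
  have mB: "mB > 0" unfolding mB_def B_def using e by simp
  have emB: "emeasure lborel B = ennreal mB"
    unfolding mB_def B_def using emeasure_lborel_ball_finite[of x0 "e/2"]
    by (intro emeasure_eq_ennreal_measure) (simp add: less_top)
  have bound: "exp (real (Suc n) * (d/2)) * (r/2) * mB \<le> 1" for n
  proof -
    have "ennreal (exp (real (Suc n) * (d/2)) * (r/2)) * emeasure lborel B
        = (\<integral>\<^sup>+x. ennreal (exp (real (Suc n) * (d/2)) * (r/2)) * indicator B x \<partial>lborel)"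
      unfolding B_def by (simp add: nn_integral_cmult_indicator)
    also have "\<dots> \<le> (\<integral>\<^sup>+x\<in>D. ennreal (exp (real (Suc n) * (1 - \<sigma> x t / \<rho> x t)) * \<rho> x t) \<partial>lborel)"
    proof (rule nn_integral_mono)
      fix x
      show "ennreal (exp (real (Suc n) * (d/2)) * (r/2)) * indicator B x
          \<le> ennreal (exp (real (Suc n) * (1 - \<sigma> x t / \<rho> x t)) * \<rho> x t) * indicator D x"
      proof (cases "x \<in> B")
        case True
        have xD: "x \<in> D" using inU(1)[of x t] True t B_def by simp
        have h1: "1 - \<sigma> x t / \<rho> x t > d/2" "\<rho> x t > r/2" using inU(3,4)[of x t] True t B_def by auto
        have "exp (real (Suc n) * (d/2)) \<le> exp (real (Suc n) * (1 - \<sigma> x t / \<rho> x t))"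
          using h1 by (intro exp_mono mult_left_mono) auto
        then have "exp (real (Suc n) * (d/2)) * (r/2) \<le> exp (real (Suc n) * (1 - \<sigma> x t / \<rho> x t)) * \<rho> x t"
          using h1 r by (intro mult_mono) auto
        then show ?thesis using True xD by (simp add: ennreal_leI)
      qed simp
    qed
    also have "\<dots> \<le> 1" using tP tT by blast
    finally have le: "ennreal (exp (real (Suc n) * (d/2)) * (r/2)) * ennreal mB \<le> 1"
      by (simp only: emB)
    have eq: "ennreal (exp (real (Suc n) * (d/2)) * (r/2) * mB) = ennreal (exp (real (Suc n) * (d/2)) * (r/2)) * ennreal mB"
      by (rule ennreal_mult) (use r mB in auto)
    have "ennreal (exp (real (Suc n) * (d/2)) * (r/2) * mB) \<le> 1" using le by (simp only: eq)
    then show ?thesis by (simp only: ennreal_le_1)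
  qed
  obtain n :: nat where n: "1 / ((d/2) * (r/2) * mB) < real n" using reals_Archimedean2 by blast
  have pos: "(d/2) * (r/2) * mB > 0" using d r mB by simp
  have "real (Suc n) * (d/2) < exp (real (Suc n) * (d/2))"
    using exp_ge_add_one_self[of "real (Suc n) * (d/2)"] by linarith
  then have "real (Suc n) * (d/2) * (r/2) * mB < exp (real (Suc n) * (d/2)) * (r/2) * mB"
    using r mB by (intro mult_strict_right_mono) auto
  also have "\<dots> \<le> 1" by (rule bound)
  finally have "real (Suc n) * ((d/2) * (r/2) * mB) < 1" by (simp only: mult.assoc)
  moreover have "1 < real n * ((d/2) * (r/2) * mB)" using n unfolding pos_divide_less_eq[OF pos] .
  moreover have "real (Suc n) * ((d/2) * (r/2) * mB) = real n * ((d/2) * (r/2) * mB) + (d/2) * (r/2) * mB"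
    by (simp only: of_nat_Suc distrib_right mult_1_left add.commute)
  ultimately show False using pos by linarith
qed

lemma int_eq:
  fixes D :: "(real^'n::finite) set" and c f g :: "real^'n \<Rightarrow> real \<Rightarrow> real"
  assumes t: "t \<in> {0<..<T}"
    and gint: "integrable lborel (\<lambda>s. \<integral>x. g x s \<partial>lborel)"
    and g_def: "\<And>x s. g x s = indicator (D \<times> {0<..<T}) (x,s) * (c x s * f x s)"
  shows "(\<integral>s\<in>{0..t}. (\<integral>x\<in>D. c x s * f x s \<partial>lborel) \<partial>lborel)
       = (\<integral>s. indicator {0..t} s *\<^sub>R (\<integral>x. g x s \<partial>lborel) \<partial>lborel)"
proof -
  define F where "F s = (\<integral>x\<in>D. c x s * f x s \<partial>lborel)" for s
  define G where "G s = (\<integral>x. g x s \<partial>lborel)" for s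
  have FG: "F s = G s" if "s \<in> {0<..t}" for s
  proof -
    have "s < T" using that t by auto
    then show ?thesis unfolding F_def G_def set_lebesgue_integral_def
      using that by (intro Bochner_Integration.integral_cong) (auto simp: g_def indicator_def)
  qed
  define H where "H s = (if s \<in> {0} then F 0 else indicator {0..t} s *\<^sub>R G s)" for s
  have Gm: "G \<in> borel_measurable lborel" using gint unfolding G_def by auto
  have Hm: "H \<in> borel_measurable lborel"
    unfolding H_def by (intro measurable_If_set) (use Gm in auto)
  have IGm: "(\<lambda>s. indicator {0..t} s *\<^sub>R G s) \<in> borel_measurable lborel" using Gm by measurable
  have "(\<integral>s\<in>{0..t}. F s \<partial>lborel) = (\<integral>s. H s \<partial>lborel)"
    unfolding set_lebesgue_integral_def
  proof (rule Bochner_Integration.integral_cong)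
    fix s
    show "indicator {0..t} s *\<^sub>R F s = H s"
    proof (cases "s = 0")
      case True
      then show ?thesis using t by (simp add: H_def)
    next
      case False
      then show ?thesis using FG[of s] by (auto simp: H_def indicator_def)
    qed
  qed simp
  also have "\<dots> = (\<integral>s. indicator {0..t} s *\<^sub>R G s \<partial>lborel)"
  proof (rule integral_cong_AE[OF Hm IGm])
    show "AE s in lborel. H s = indicator {0..t} s *\<^sub>R G s"
      using AE_lborel_singleton[of 0] by (rule AE_mp) (intro AE_I2, simp add: H_def)
  qed
  finally show ?thesis unfolding F_def G_def .
qed

theorem lemma4p1:
  fixes T p :: real and D :: "(real^'n::finite) set" and Dk :: "nat \<Rightarrow> (real^'n) set"
    and \<nu> :: "(real^'n) measure" and a :: "real^'n \<Rightarrow> real \<Rightarrow> 'n \<Rightarrow> 'n \<Rightarrow> real"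
    and b :: "real^'n \<Rightarrow> real \<Rightarrow> real^'n" and c :: "real^'n \<Rightarrow> real \<Rightarrow> real"
    and \<rho> \<sigma> :: "real^'n \<Rightarrow> real \<Rightarrow> real"
  assumes setting: "standing_setting T D Dk \<nu> a b c p"
    and rho_cont: "continuous_on (D \<times> {0<..<T}) (\<lambda>(x, t). \<rho> x t)"
    and sigma_cont: "continuous_on (D \<times> {0<..<T}) (\<lambda>(x, t). \<sigma> x t)"
    and rho_pos: "\<forall>x\<in>D. \<forall>t\<in>{0<..<T}. \<rho> x t > 0"
    and sigma_pos: "\<forall>x\<in>D. \<forall>t\<in>{0<..<T}. \<sigma> x t > 0"
    and rho_MM: "in_MM_nu T D Dk \<nu> a b c (dens_flow D \<rho>)"
    and sigma_MM: "in_MM_nu T D Dk \<nu> a b c (dens_flow D \<sigma>)"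
    and rho_mass: "AE t in lborel. t \<in> {0<..<T} \<longrightarrow>
       (\<integral>x\<in>D. \<rho> x t \<partial>lborel) = measure \<nu> D + (\<integral>s\<in>{0..t}. (\<integral>x\<in>D. c x s * \<rho> x s \<partial>lborel) \<partial>lborel)"
    and sigma_mass: "AE t in lborel. t \<in> {0<..<T} \<longrightarrow>
       (\<integral>x\<in>D. \<sigma> x t \<partial>lborel) \<le> measure \<nu> D + (\<integral>s\<in>{0..t}. (\<integral>x\<in>D. c x s * \<sigma> x s \<partial>lborel) \<partial>lborel)"
    and exp_bound: "\<forall>l>0. AE t in lborel. t \<in> {0<..<T} \<longrightarrow>
       (\<integral>\<^sup>+x\<in>D. ennreal (exp (l * (1 - \<sigma> x t / \<rho> x t)) * \<rho> x t) \<partial>lborel) \<le> 1"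
  shows "\<forall>x\<in>D. \<forall>t\<in>{0<..<T}. \<sigma> x t = \<rho> x t"
proof -
  from setting have T: "T > 0" and oD: "open D" and cle: "\<forall>x\<in>D. \<forall>t\<in>{0..T}. c x t \<le> 0"
    and cmeas: "(\<lambda>z. indicator (D \<times> {0..T}) z *\<^sub>R (\<lambda>(x, t). c x t) z) \<in> borel_measurable borel"
    unfolding standing_setting_def set_borel_measurable_def by auto
  from rho_MM have rM: "in_M_nu T D Dk \<nu> a b c (dens_flow D \<rho>)" unfolding in_MM_nu_def by auto
  from sigma_MM have sM: "in_M_nu T D Dk \<nu> a b c (dens_flow D \<sigma>)" unfolding in_MM_nu_def by auto
  have rflow: "flow_int T (dens_flow D \<rho>) (\<lambda>x t. \<bar>c x t\<bar>) (D \<times> UNIV) < \<infinity>"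
    using rM unfolding in_M_nu_def by auto
  have sflow: "flow_int T (dens_flow D \<sigma>) (\<lambda>x t. \<bar>c x t\<bar>) (D \<times> UNIV) < \<infinity>"
    using sM unfolding in_M_nu_def by auto
  have rfin: "AE t in lborel. t \<in> {0<..<T} \<longrightarrow> emeasure (dens_flow D \<rho> t) D \<noteq> \<infinity>"
    using rM unfolding in_M_nu_def by (auto elim: AE_mp)
  have sfin: "AE t in lborel. t \<in> {0<..<T} \<longrightarrow> emeasure (dens_flow D \<sigma> t) D \<noteq> \<infinity>"
    using sM unfolding in_M_nu_def by (auto elim: AE_mp)
  define gr where "gr = (\<lambda>x s. indicator (D \<times> {0<..<T}) (x,s) * (c x s * \<rho> x s))"
  define gs where "gs = (\<lambda>x s. indicator (D \<times> {0<..<T}) (x,s) * (c x s * \<sigma> x s))"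
  have grm: "(\<lambda>(x,s). gr x s) \<in> borel_measurable borel"
    unfolding gr_def by (rule G_lemma(1)[OF oD cmeas rho_cont rho_pos rflow])
  have grf: "(\<integral>\<^sup>+s. (\<integral>\<^sup>+x. ennreal \<bar>gr x s\<bar> \<partial>lborel) \<partial>lborel) < \<infinity>"
    unfolding gr_def by (rule G_lemma(2)[OF oD cmeas rho_cont rho_pos rflow])
  have gsm: "(\<lambda>(x,s). gs x s) \<in> borel_measurable borel"
    unfolding gs_def by (rule G_lemma(1)[OF oD cmeas sigma_cont sigma_pos sflow])
  have gsf: "(\<integral>\<^sup>+s. (\<integral>\<^sup>+x. ennreal \<bar>gs x s\<bar> \<partial>lborel) \<partial>lborel) < \<infinity>"
    unfolding gs_def by (rule G_lemma(2)[OF oD cmeas sigma_cont sigma_pos sflow])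
  note rAE = G2(1)[OF grm grf] and rint = G2(2)[OF grm grf]
  note sAE = G2(1)[OF gsm gsf] and sint = G2(2)[OF gsm gsf]
  have ge: "\<forall>x\<in>D. \<forall>t\<in>{0<..<T}. \<rho> x t \<le> \<sigma> x t"
    by (rule stepA[OF oD rho_cont sigma_cont rho_pos exp_bound])
  have cmp: "(\<integral>s. indicator {0..t} s *\<^sub>R (\<integral>x. gs x s \<partial>lborel) \<partial>lborel)
      \<le> (\<integral>s. indicator {0..t} s *\<^sub>R (\<integral>x. gr x s \<partial>lborel) \<partial>lborel)" for t :: real
  proof (rule integral_mono_AE)
    show "integrable lborel (\<lambda>s. indicator {0..t} s *\<^sub>R (\<integral>x. gs x s \<partial>lborel))"
      by (rule integrable_mult_indicator[OF _ sint]) simp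
    show "integrable lborel (\<lambda>s. indicator {0..t} s *\<^sub>R (\<integral>x. gr x s \<partial>lborel))"
      by (rule integrable_mult_indicator[OF _ rint]) simp
    show "AE s in lborel. indicator {0..t} s *\<^sub>R (\<integral>x. gs x s \<partial>lborel)
        \<le> indicator {0..t} s *\<^sub>R (\<integral>x. gr x s \<partial>lborel)"
      using rAE sAE
    proof (eventually_elim)
      case (elim s)
      have "(\<integral>x. gs x s \<partial>lborel) \<le> (\<integral>x. gr x s \<partial>lborel)"
      proof (rule integral_mono[OF elim(2) elim(1)])
        fix x
        show "gs x s \<le> gr x s"
        proof (cases "(x,s) \<in> D \<times> {0<..<T}")
          case True
          then have "c x s \<le> 0" "\<rho> x s \<le> \<sigma> x s" using cle ge by auto
          then have "c x s * \<sigma> x s \<le> c x s * \<rho> x s" by (rule mult_left_mono_neg[rotated])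
          then show ?thesis using True by (simp add: gs_def gr_def)
        qed (simp add: gs_def gr_def)
      qed
      then show ?case by (simp add: indicator_def)
    qed
  qed
  show ?thesis
  proof (intro ballI, rule ccontr)
    fix x0 t0 assume x0: "x0 \<in> D" and t0: "t0 \<in> {0<..<T}" and ne: "\<sigma> x0 t0 \<noteq> \<rho> x0 t0"
    have gt: "\<sigma> x0 t0 > \<rho> x0 t0" using ne ge x0 t0 by force
    define DT where "DT = D \<times> {0<..<T}"
    have oDT: "open DT" using oD unfolding DT_def by (intro open_Times) auto
    define d where "d = \<sigma> x0 t0 - \<rho> x0 t0"
    have d: "d > 0" using gt d_def by simp
    have hc: "continuous_on DT (\<lambda>z. (\<lambda>(x, t). \<sigma> x t) z - (\<lambda>(x, t). \<rho> x t) z)"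
      by (rule continuous_on_diff[OF sigma_cont[folded DT_def] rho_cont[folded DT_def]])
    define U where "U = DT \<inter> (\<lambda>z. (\<lambda>(x, t). \<sigma> x t) z - (\<lambda>(x, t). \<rho> x t) z) -` {d/2<..}"
    have oU: "open U" unfolding U_def
      using hc[unfolded continuous_on_open_vimage[OF oDT], rule_format, OF open_greaterThan] by (simp add: Int_commute)
    have h0: "\<sigma> x0 t0 - \<rho> x0 t0 > d/2" using d d_def by simp
    have "(x0, t0) \<in> U" using x0 t0 h0 by (simp add: U_def DT_def)
    then obtain e where e: "e > 0" "ball (x0, t0) e \<subseteq> U"
      using oU open_contains_ball by blast
    have inU: "x \<in> D" "t \<in> {0<..<T}" "\<sigma> x t - \<rho> x t > d/2"
      if "x \<in> ball x0 (e/2)" "t \<in> ball t0 (e/2)" for x t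
    proof -
      have "(x,t) \<in> ball (x0,t0) e" using that dist_pair_lt[of x x0 e t t0]
        by (simp add: dist_commute)
      then have "(x,t) \<in> U" using e by auto
      then show "x \<in> D" "t \<in> {0<..<T}" "\<sigma> x t - \<rho> x t > d/2"
        unfolding U_def DT_def by auto
    qed
    have "AE t in lborel. t \<in> {0<..<T} \<longrightarrow>
       (\<integral>x\<in>D. \<rho> x t \<partial>lborel) = measure \<nu> D + (\<integral>s\<in>{0..t}. (\<integral>x\<in>D. c x s * \<rho> x s \<partial>lborel) \<partial>lborel)
       \<and> (\<integral>x\<in>D. \<sigma> x t \<partial>lborel) \<le> measure \<nu> D + (\<integral>s\<in>{0..t}. (\<integral>x\<in>D. c x s * \<sigma> x s \<partial>lborel) \<partial>lborel)
       \<and> emeasure (dens_flow D \<rho> t) D \<noteq> \<infinity> \<and> emeasure (dens_flow D \<sigma> t) D \<noteq> \<infinity>"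
      using rho_mass sigma_mass rfin sfin by eventually_elim blast
    then have "\<exists>t\<in>ball t0 (e/2). t \<in> {0<..<T} \<longrightarrow>
       (\<integral>x\<in>D. \<rho> x t \<partial>lborel) = measure \<nu> D + (\<integral>s\<in>{0..t}. (\<integral>x\<in>D. c x s * \<rho> x s \<partial>lborel) \<partial>lborel)
       \<and> (\<integral>x\<in>D. \<sigma> x t \<partial>lborel) \<le> measure \<nu> D + (\<integral>s\<in>{0..t}. (\<integral>x\<in>D. c x s * \<sigma> x s \<partial>lborel) \<partial>lborel)
       \<and> emeasure (dens_flow D \<rho> t) D \<noteq> \<infinity> \<and> emeasure (dens_flow D \<sigma> t) D \<noteq> \<infinity>"
      by (rule AE_ball_ex) (simp add: e(1))
    then obtain t where t: "t \<in> ball t0 (e/2)" and tP: "t \<in> {0<..<T} \<longrightarrow>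
       (\<integral>x\<in>D. \<rho> x t \<partial>lborel) = measure \<nu> D + (\<integral>s\<in>{0..t}. (\<integral>x\<in>D. c x s * \<rho> x s \<partial>lborel) \<partial>lborel)
       \<and> (\<integral>x\<in>D. \<sigma> x t \<partial>lborel) \<le> measure \<nu> D + (\<integral>s\<in>{0..t}. (\<integral>x\<in>D. c x s * \<sigma> x s \<partial>lborel) \<partial>lborel)
       \<and> emeasure (dens_flow D \<rho> t) D \<noteq> \<infinity> \<and> emeasure (dens_flow D \<sigma> t) D \<noteq> \<infinity>"
      by blast
    have tT: "t \<in> {0<..<T}" using inU(2)[of x0 t] t e by simp
    from tP tT have rm: "(\<integral>x\<in>D. \<rho> x t \<partial>lborel) = measure \<nu> D + (\<integral>s\<in>{0..t}. (\<integral>x\<in>D. c x s * \<rho> x s \<partial>lborel) \<partial>lborel)"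
      and sm: "(\<integral>x\<in>D. \<sigma> x t \<partial>lborel) \<le> measure \<nu> D + (\<integral>s\<in>{0..t}. (\<integral>x\<in>D. c x s * \<sigma> x s \<partial>lborel) \<partial>lborel)"
      and rf: "emeasure (dens_flow D \<rho> t) D \<noteq> \<infinity>" and sf: "emeasure (dens_flow D \<sigma> t) D \<noteq> \<infinity>"
      by blast+
    have ri: "integrable lborel (\<lambda>x. indicator D x * \<rho> x t)" by (rule sec_int[OF oD rho_cont rho_pos tT rf])
    have si: "integrable lborel (\<lambda>x. indicator D x * \<sigma> x t)" by (rule sec_int[OF oD sigma_cont sigma_pos tT sf])
    define B where "B = ball x0 (e/2)"
    define mB where "mB = measure lborel B"
    have mB: "mB > 0" unfolding mB_def B_def using e by simp
    have emB: "emeasure lborel B < \<infinity>"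
      unfolding B_def by (rule emeasure_lborel_ball_finite)
    have Bi: "integrable lborel (indicator B :: _ \<Rightarrow> real)"
      using emB by (intro integrable_real_indicator) (auto simp: B_def)
    have intB: "(\<integral>x. indicator B x \<partial>lborel) = mB"
      unfolding mB_def by simp
    have "(\<integral>x. indicator D x * \<rho> x t + (d/2) * indicator B x \<partial>lborel) \<le> (\<integral>x. indicator D x * \<sigma> x t \<partial>lborel)"
    proof (rule integral_mono)
      show "integrable lborel (\<lambda>x. indicator D x * \<rho> x t + (d/2) * indicator B x)"
        using ri Bi by (intro Bochner_Integration.integrable_add integrable_mult_right)
      show "integrable lborel (\<lambda>x. indicator D x * \<sigma> x t)" by (rule si)
      fix x
      show "indicator D x * \<rho> x t + (d/2) * indicator B x \<le> indicator D x * \<sigma> x t"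
      proof (cases "x \<in> B")
        case True
        have "x \<in> D" "\<sigma> x t - \<rho> x t > d/2" using inU(1,3)[of x t] True t B_def by auto
        then show ?thesis using True by simp
      next
        case False
        then show ?thesis using ge tT by (cases "x \<in> D") auto
      qed
    qed
    also have "(\<integral>x. indicator D x * \<rho> x t + (d/2) * indicator B x \<partial>lborel)
        = (\<integral>x. indicator D x * \<rho> x t \<partial>lborel) + (d/2) * mB"
      using ri Bi intB by (simp add: Bochner_Integration.integral_add integral_mult_right)
    finally have big: "(\<integral>x. indicator D x * \<rho> x t \<partial>lborel) + (d/2) * mB \<le> (\<integral>x. indicator D x * \<sigma> x t \<partial>lborel)" .
    have gr_eq: "\<And>x s. gr x s = indicator (D \<times> {0<..<T}) (x,s) * (c x s * \<rho> x s)" by (simp add: gr_def)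
    have gs_eq: "\<And>x s. gs x s = indicator (D \<times> {0<..<T}) (x,s) * (c x s * \<sigma> x s)" by (simp add: gs_def)
    have "(\<integral>x. indicator D x * \<sigma> x t \<partial>lborel) = (\<integral>x\<in>D. \<sigma> x t \<partial>lborel)"
      by (simp add: set_lebesgue_integral_def)
    also have "\<dots> \<le> measure \<nu> D + (\<integral>s\<in>{0..t}. (\<integral>x\<in>D. c x s * \<sigma> x s \<partial>lborel) \<partial>lborel)" by (rule sm)
    also have "\<dots> = measure \<nu> D + (\<integral>s. indicator {0..t} s *\<^sub>R (\<integral>x. gs x s \<partial>lborel) \<partial>lborel)"
      by (subst int_eq[OF tT sint gs_eq]) (rule refl)
    also have "\<dots> \<le> measure \<nu> D + (\<integral>s. indicator {0..t} s *\<^sub>R (\<integral>x. gr x s \<partial>lborel) \<partial>lborel)"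
      using cmp[of t] by (rule add_left_mono)
    also have "\<dots> = measure \<nu> D + (\<integral>s\<in>{0..t}. (\<integral>x\<in>D. c x s * \<rho> x s \<partial>lborel) \<partial>lborel)"
      by (subst int_eq[OF tT rint gr_eq]) (rule refl)
    also have "\<dots> = (\<integral>x\<in>D. \<rho> x t \<partial>lborel)" by (rule rm[symmetric])
    also have "\<dots> = (\<integral>x. indicator D x * \<rho> x t \<partial>lborel)"
      by (simp add: set_lebesgue_integral_def)
    finally have "(\<integral>x. indicator D x * \<sigma> x t \<partial>lborel) \<le> (\<integral>x. indicator D x * \<rho> x t \<partial>lborel)" .
    moreover have "(d/2) * mB > 0" using d mB by simp
    ultimately show False using big by linarith
  qed
qed

end
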